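(* Let $G=K\rtimes H$ be a Frobenius group with kernel $K$ and complement $H$, acting on $K$ by $\circ$, and suppose $|H|\neq|K|-1$. Then for any two distinct elements $u,v\in K$, $$|\{z\in K:\ z \text{ separates } u \text{ and } v\}|>|K|/2.$$
   Context: A Frobenius group is a finite group $G$ acting transitively on a finite set such that only the identity has more than one fixed point and some nontrivial element fixes a point; its kernel $K$ (identity plus fixed-point-free elements) is normal and a complement $H$ (a point stabilizer) satisfies $K\cap H=\{1\}$, $G=KH$. The action $\circ$ of $G$ on $K$: for $g=yh$ with $y\in K,h\in H$, $g\circ x=yhxh^{-1}$. For $u\neq v$ in $K$, $z\in K$ separates $u$ and $v$ if $v\circ z\notin H\circ(u\circ z)$, where $H\circ w=\{h\circ w:h\in H\}$. *)

theory Defs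
  imports Complex_Main "HOL-Algebra.Group_Action"
begin

definition frobenius_action :: "('a, 'c) monoid_scheme \<Rightarrow> 'b set \<Rightarrow> ('a \<Rightarrow> 'b \<Rightarrow> 'b) \<Rightarrow> bool" where
  "frobenius_action G E \<phi> \<longleftrightarrow>
     transitive_action G E \<phi> \<and> finite (carrier G) \<and> finite E \<and>
     (\<forall>g \<in> carrier G. g \<noteq> \<one>\<^bsub>G\<^esub> \<longrightarrow> card (invariants E \<phi> g) \<le> 1) \<and>
     (\<exists>g \<in> carrier G. g \<noteq> \<one>\<^bsub>G\<^esub> \<and> invariants E \<phi> g \<noteq> {})"

definition frobenius_kernel :: "('a, 'c) monoid_scheme \<Rightarrow> 'b set \<Rightarrow> ('a \<Rightarrow> 'b \<Rightarrow> 'b) \<Rightarrow> 'a set" where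
  "frobenius_kernel G E \<phi> = {\<one>\<^bsub>G\<^esub>} \<union> {g \<in> carrier G. invariants E \<phi> g = {}}"

definition frob_circ :: "('a, 'c) monoid_scheme \<Rightarrow> 'a set \<Rightarrow> 'a set \<Rightarrow> 'a \<Rightarrow> 'a \<Rightarrow> 'a" where
  "frob_circ G K H g x =
     (THE w. \<exists>y \<in> K. \<exists>h \<in> H. g = y \<otimes>\<^bsub>G\<^esub> h \<and> w = y \<otimes>\<^bsub>G\<^esub> h \<otimes>\<^bsub>G\<^esub> x \<otimes>\<^bsub>G\<^esub> inv\<^bsub>G\<^esub> h)"

definition separates :: "('a, 'c) monoid_scheme \<Rightarrow> 'a set \<Rightarrow> 'a set \<Rightarrow> 'a \<Rightarrow> 'a \<Rightarrow> 'a \<Rightarrow> bool" where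
  "separates G K H z u v \<longleftrightarrow>
     frob_circ G K H v z \<notin> (\<lambda>h. frob_circ G K H h (frob_circ G K H u z)) ` H"

end

theory Submission
  imports Defs
begin

lemma (in group) inv_cancel_l1 [simp]:
  "x \<in> carrier G \<Longrightarrow> y \<in> carrier G \<Longrightarrow> inv x \<otimes> (x \<otimes> y) = y"
  by (simp add: m_assoc[symmetric])

lemma (in group) inv_cancel_l2 [simp]:
  "x \<in> carrier G \<Longrightarrow> y \<in> carrier G \<Longrightarrow> x \<otimes> (inv x \<otimes> y) = y"
  by (simp add: m_assoc[symmetric])

lemma lemma3_aux:
  fixes G :: "('a, 'c) monoid_scheme" (structure) and E :: "'b set" and \<phi> :: "'a \<Rightarrow> 'b \<Rightarrow> 'b"
    and \<omega> :: 'b and K H :: "'a set" and u v :: 'a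
  assumes "group G"
    and "frobenius_action G E \<phi>"
    and "\<omega> \<in> E"
    and "K = frobenius_kernel G E \<phi>"
    and "H = stabilizer G \<phi> \<omega>"
    and "K \<lhd> G"
    and "K \<inter> H = {\<one>\<^bsub>G\<^esub>}"
    and "K <#>\<^bsub>G\<^esub> H = carrier G"
    and "card H \<noteq> card K - 1"
    and "u \<in> K" and "v \<in> K" and "u \<noteq> v"
  shows "real (card {z \<in> K. separates G K H z u v}) > real (card K) / 2"
proof -
  interpret group G by fact
  have fa: "transitive_action G E \<phi>" "finite (carrier G)" "finite E"
    and fix1: "\<And>g. g \<in> carrier G \<Longrightarrow> g \<noteq> \<one> \<Longrightarrow> card (invariants E \<phi> g) \<le> 1"
    using assms(2) unfolding frobenius_action_def by auto
  interpret group_action G E \<phi> using fa(1) transitive_action.axioms(1) by blast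
  interpret N: normal K G by fact
  have Hsub: "subgroup H G" using stabilizer_subgroup[OF assms(3)] assms(5) by simp
  have Kc: "K \<subseteq> carrier G" by (simp add: N.subset)
  have Hc: "H \<subseteq> carrier G" using Hsub subgroup.subset by blast
  have finK: "finite K" using Kc fa(2) finite_subset by blast
  have finH: "finite H" using Hc fa(2) finite_subset by blast
  have oneH: "\<one> \<in> H" using Hsub subgroup.one_closed by blast
  have oneK: "\<one> \<in> K" using N.one_closed .
  have nfree: "k = \<one> \<or> x = \<one>" if k: "k \<in> H" and x: "x \<in> K" and c: "k \<otimes> x = x \<otimes> k" for k x
  proof (rule ccontr)
    assume ne: "\<not> (k = \<one> \<or> x = \<one>)"
    have kc: "k \<in> carrier G" and xc: "x \<in> carrier G" using k x Hc Kc by auto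
    have kw: "\<phi> k \<omega> = \<omega>" using k assms(5) unfolding stabilizer_def by auto
    have xinv: "invariants E \<phi> x = {}" using x ne unfolding assms(4) frobenius_kernel_def by blast
    have xw: "\<phi> x \<omega> \<in> E" using element_image[OF xc assms(3)] by simp
    have xne: "\<phi> x \<omega> \<noteq> \<omega>" using xinv assms(3) unfolding invariants_def by auto
    have "\<phi> k (\<phi> x \<omega>) = \<phi> x \<omega>"
    proof -
      have "\<phi> k (\<phi> x \<omega>) = \<phi> (k \<otimes> x) \<omega>" using composition_rule[OF assms(3) kc xc] by simp
      also have "\<dots> = \<phi> (x \<otimes> k) \<omega>" using c by simp
      also have "\<dots> = \<phi> x (\<phi> k \<omega>)" using composition_rule[OF assms(3) xc kc] by simp
      finally show ?thesis using kw by simp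
    qed
    hence "{\<omega>, \<phi> x \<omega>} \<subseteq> invariants E \<phi> k" using kw xw assms(3) unfolding invariants_def by auto
    hence "card {\<omega>, \<phi> x \<omega>} \<le> card (invariants E \<phi> k)"
      by (intro card_mono) (auto simp: invariants_def fa(3))
    with fix1[OF kc] ne xne show False by simp
  qed
  have uniq: "y = y' \<and> h = h'" if "y \<in> K" "y' \<in> K" "h \<in> H" "h' \<in> H" "y \<otimes> h = y' \<otimes> h'" for y y' h h'
  proof -
    have c: "y \<in> carrier G" "y' \<in> carrier G" "h \<in> carrier G" "h' \<in> carrier G" using that Kc Hc by auto
    have "inv y' \<otimes> y = inv y' \<otimes> (y \<otimes> h) \<otimes> inv h" by (simp add: c m_assoc)
    also have "\<dots> = inv y' \<otimes> (y' \<otimes> h') \<otimes> inv h" using that(5) by simp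
    also have "\<dots> = h' \<otimes> inv h" by (simp add: c m_assoc[symmetric])
    finally have e1: "inv y' \<otimes> y = h' \<otimes> inv h" .
    have "inv y' \<otimes> y \<in> K" using that by (simp add: N.m_closed N.m_inv_closed)
    moreover have "h' \<otimes> inv h \<in> H" using that Hsub by (simp add: subgroup.m_closed subgroup.m_inv_closed)
    ultimately have "inv y' \<otimes> y = \<one>" using e1 assms(7) by auto
    hence yy: "y = y'" using c(1,2) by (metis inv_closed inv_equality inv_inv)
    thus ?thesis using that(5) c by simp
  qed
  have circ: "frob_circ G K H (y \<otimes> h) x = y \<otimes> h \<otimes> x \<otimes> inv h" if "y \<in> K" "h \<in> H" for y h x
    unfolding frob_circ_def
  proof (rule the_equality)
    show "\<exists>y'\<in>K. \<exists>h'\<in>H. y \<otimes> h = y' \<otimes> h' \<and> y \<otimes> h \<otimes> x \<otimes> inv h = y' \<otimes> h' \<otimes> x \<otimes> inv h'"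
      using that by blast
    fix w assume "\<exists>y'\<in>K. \<exists>h'\<in>H. y \<otimes> h = y' \<otimes> h' \<and> w = y' \<otimes> h' \<otimes> x \<otimes> inv h'"
    then show "w = y \<otimes> h \<otimes> x \<otimes> inv h" using uniq[OF that(1) _ that(2)] by blast
  qed
  have circK: "frob_circ G K H y x = y \<otimes> x" if "y \<in> K" "x \<in> carrier G" for y x
    using circ[OF that(1) oneH, of x] that Kc by auto
  have circH: "frob_circ G K H h x = h \<otimes> x \<otimes> inv h" if "h \<in> H" for h x
    using circ[OF oneK that, of x] that Hc by auto
  have uc: "u \<in> carrier G" and vc: "v \<in> carrier G" using assms(10,11) Kc by auto
  define S where "S h = {z \<in> K. v \<otimes> z = h \<otimes> (u \<otimes> z) \<otimes> inv h}" for h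
  define NS where "NS = {z \<in> K. \<not> separates G K H z u v}"
  have NSsub: "NS \<subseteq> (\<Union>h\<in>H - {\<one>}. S h)"
  proof
    fix z assume "z \<in> NS"
    hence z: "z \<in> K" and ns: "\<not> separates G K H z u v" unfolding NS_def by auto
    have zc: "z \<in> carrier G" using z Kc by auto
    from ns obtain h where h: "h \<in> H" and eq: "frob_circ G K H v z = frob_circ G K H h (frob_circ G K H u z)"
      unfolding separates_def by auto
    have eq2: "v \<otimes> z = h \<otimes> (u \<otimes> z) \<otimes> inv h"
      using eq circK[OF assms(10) zc] circK[OF assms(11) zc] circH[OF h] by simp
    have "h \<noteq> \<one>"
    proof
      assume "h = \<one>"
      with eq2 have "v \<otimes> z = u \<otimes> z" using uc zc by simp
      with uc vc zc assms(12) show False by simp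
    qed
    thus "z \<in> (\<Union>h\<in>H - {\<one>}. S h)" using h z eq2 unfolding S_def by auto
  qed
  have S1: "card (S h) \<le> 1" if h: "h \<in> H - {\<one>}" for h
  proof -
    have hc: "h \<in> carrier G" using h Hc by auto
    have ihH: "inv h \<in> H" using h Hsub by (simp add: subgroup.m_inv_closed)
    have ih1: "inv h \<noteq> \<one>"
    proof
      assume "inv h = \<one>"
      hence "inv (inv h) = \<one>" by simp
      with h hc show False by simp
    qed
    define p where "p = inv (h \<otimes> u) \<otimes> v"
    have pc: "p \<in> carrier G" unfolding p_def using hc uc vc by simp
    have pz: "p \<otimes> z = z \<otimes> inv h" if "z \<in> S h" for z
    proof -
      have z: "z \<in> K" and e: "v \<otimes> z = h \<otimes> (u \<otimes> z) \<otimes> inv h" using that by (simp_all add: S_def)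
      have zc: "z \<in> carrier G" using z Kc by blast
      have "p \<otimes> z = inv (h \<otimes> u) \<otimes> (v \<otimes> z)" unfolding p_def using hc uc vc zc by (simp add: m_assoc)
      also have "\<dots> = inv (h \<otimes> u) \<otimes> (h \<otimes> (u \<otimes> z) \<otimes> inv h)" using e by simp
      also have "\<dots> = z \<otimes> inv h" using hc uc zc by (simp add: m_assoc inv_mult_group)
      finally show ?thesis .
    qed
    have "z = z'" if "z \<in> S h" "z' \<in> S h" for z z'
    proof -
      have zK: "z \<in> K" "z' \<in> K" using that by (simp_all add: S_def)
      hence zc: "z \<in> carrier G" "z' \<in> carrier G" using Kc by blast+
      define x where "x = inv z' \<otimes> z"
      have xK: "x \<in> K" unfolding x_def using zK by (simp add: N.m_closed N.m_inv_closed)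
      have a1: "inv z' \<otimes> p = inv h \<otimes> inv z'"
      proof -
        have "inv z' \<otimes> p = inv z' \<otimes> (p \<otimes> z') \<otimes> inv z'" using zc pc by (simp add: m_assoc)
        also have "\<dots> = inv z' \<otimes> (z' \<otimes> inv h) \<otimes> inv z'" using pz[OF that(2)] by simp
        also have "\<dots> = inv h \<otimes> inv z'" using zc hc by (simp add: m_assoc)
        finally show ?thesis .
      qed
      have "inv h \<otimes> x = x \<otimes> inv h"
      proof -
        have "x \<otimes> inv h = inv z' \<otimes> (z \<otimes> inv h)" unfolding x_def using zc hc by (simp add: m_assoc)
        also have "\<dots> = inv z' \<otimes> (p \<otimes> z)" using pz[OF that(1)] by simp
        also have "\<dots> = (inv z' \<otimes> p) \<otimes> z" using zc pc by (simp add: m_assoc)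
        also have "\<dots> = inv h \<otimes> x" unfolding a1 x_def using zc hc by (simp add: m_assoc)
        finally show ?thesis by simp
      qed
      with nfree[OF ihH xK] ih1 have "x = \<one>" by simp
      hence "z' \<otimes> x = z'" using zc by simp
      thus ?thesis unfolding x_def using zc by simp
    qed
    moreover have "finite (S h)" using finK unfolding S_def by simp
    ultimately show ?thesis using card_le_Suc0_iff_eq by (metis One_nat_def)
  qed
  have cardNS: "card NS \<le> card H - 1"
  proof -
    have "card NS \<le> card (\<Union>h\<in>H - {\<one>}. S h)"
    proof (rule card_mono[OF _ NSsub])
      show "finite (\<Union>h\<in>H - {\<one>}. S h)" by (rule finite_subset[OF _ finK]) (auto simp: S_def)
    qed
    also have "\<dots> \<le> (\<Sum>h\<in>H - {\<one>}. card (S h))" using finH by (intro card_UN_le) simp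
    also have "\<dots> \<le> (\<Sum>h\<in>H - {\<one>}. 1)" using S1 by (intro sum_mono) auto
    also have "\<dots> = card H - 1" using finH oneH by simp
    finally show ?thesis .
  qed
  define Orb where "Orb x = (\<lambda>h. h \<otimes> x \<otimes> inv h) ` H" for x
  have Osub: "Orb x \<subseteq> K - {\<one>}" if "x \<in> K - {\<one>}" for x
  proof
    fix y assume "y \<in> Orb x"
    then obtain h where h: "h \<in> H" and y: "y = h \<otimes> x \<otimes> inv h" unfolding Orb_def by auto
    have hc: "h \<in> carrier G" and xc: "x \<in> carrier G" using h that Hc Kc by auto
    have "y \<in> K" using y N.inv_op_closed2[OF hc] that by auto
    moreover have "y \<noteq> \<one>"
    proof
      assume "y = \<one>"
      hence "inv h \<otimes> (h \<otimes> x \<otimes> inv h) \<otimes> h = \<one>" using y hc by simp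
      hence "x = \<one>" using hc xc by (simp add: m_assoc)
      with that show False by simp
    qed
    ultimately show "y \<in> K - {\<one>}" by simp
  qed
  have Ocard: "card (Orb x) = card H" if x: "x \<in> K - {\<one>}" for x
    unfolding Orb_def
  proof (rule card_image, rule inj_onI)
    fix h h' assume hh: "h \<in> H" "h' \<in> H" and e: "h \<otimes> x \<otimes> inv h = h' \<otimes> x \<otimes> inv h'"
    have c: "h \<in> carrier G" "h' \<in> carrier G" "x \<in> carrier G" using hh x Hc Kc by auto
    define k where "k = inv h' \<otimes> h"
    have kH: "k \<in> H" unfolding k_def using hh Hsub by (simp add: subgroup.m_closed subgroup.m_inv_closed)
    have kc: "k \<in> carrier G" unfolding k_def using c by simp
    have "k \<otimes> x = inv h' \<otimes> (h \<otimes> x \<otimes> inv h) \<otimes> h" unfolding k_def using c by (simp add: m_assoc)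
    also have "\<dots> = inv h' \<otimes> (h' \<otimes> x \<otimes> inv h') \<otimes> h" using e by simp
    also have "\<dots> = x \<otimes> k" unfolding k_def using c by (simp add: m_assoc)
    finally have "k = \<one>" using nfree[OF kH] x by auto
    hence "h' \<otimes> k = h'" using c by simp
    thus "h = h'" unfolding k_def using c by simp
  qed
  have finKm: "finite (K - {\<one>})" using finK by simp
  have cK1: "card (K - {\<one>}) = card K - 1" using finK oneK by simp
  obtain x where x: "x \<in> K - {\<one>}"
  proof (cases "u = \<one>")
    case True
    then have "v \<in> K - {\<one>}" using assms(11,12) by simp
    then show ?thesis by (rule that)
  next
    case False
    then have "u \<in> K - {\<one>}" using assms(10) by simp
    then show ?thesis by (rule that)
  qed
  have "Orb x \<noteq> K - {\<one>}"
  proof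
    assume "Orb x = K - {\<one>}"
    hence "card (Orb x) = card (K - {\<one>})" by simp
    thus False using Ocard[OF x] cK1 assms(9) by simp
  qed
  hence "\<not> (K - {\<one>} \<subseteq> Orb x)" using Osub[OF x] by (simp add: subset_antisym)
  then obtain y where y: "y \<in> K - {\<one>}" "y \<notin> Orb x" by (auto simp del: Diff_iff)
  have disj: "Orb x \<inter> Orb y = {}"
  proof (rule ccontr)
    assume "Orb x \<inter> Orb y \<noteq> {}"
    then obtain h h' where hh: "h \<in> H" "h' \<in> H" and e: "h \<otimes> x \<otimes> inv h = h' \<otimes> y \<otimes> inv h'"
      unfolding Orb_def by auto
    have c: "h \<in> carrier G" "h' \<in> carrier G" "x \<in> carrier G" "y \<in> carrier G" using hh x y Hc Kc by auto
    define k where "k = inv h' \<otimes> h"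
    have kH: "k \<in> H" unfolding k_def using hh Hsub by (simp add: subgroup.m_closed subgroup.m_inv_closed)
    have "k \<otimes> x \<otimes> inv k = inv h' \<otimes> (h \<otimes> x \<otimes> inv h) \<otimes> h'" unfolding k_def using c
      by (simp add: m_assoc inv_mult_group)
    also have "\<dots> = inv h' \<otimes> (h' \<otimes> y \<otimes> inv h') \<otimes> h'" using e by simp
    also have "\<dots> = y" using c by (simp add: m_assoc)
    finally have "y \<in> Orb x" unfolding Orb_def using kH by blast
    with y show False by simp
  qed
  have "card (Orb x \<union> Orb y) = card (Orb x) + card (Orb y)"
    using disj finKm Osub[OF x] Osub[OF y(1)] by (intro card_Un_disjoint) (auto intro: finite_subset)
  moreover have "card (Orb x \<union> Orb y) \<le> card (K - {\<one>})"
    using Osub[OF x] Osub[OF y(1)] finKm by (intro card_mono) auto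
  ultimately have H2: "2 * card H \<le> card K - 1" using Ocard[OF x] Ocard[OF y(1)] cK1 by simp
  have split: "card {z \<in> K. separates G K H z u v} + card NS = card K"
  proof -
    have "{z \<in> K. separates G K H z u v} \<union> NS = K" "{z \<in> K. separates G K H z u v} \<inter> NS = {}"
      unfolding NS_def by auto
    thus ?thesis using finK card_Un_disjoint[of "{z \<in> K. separates G K H z u v}" NS]
      by (metis (no_types, lifting) finite_Un)
  qed
  have "card H \<ge> 1" using finH oneH by (metis One_nat_def Suc_leI card_gt_0_iff empty_iff)
  with H2 cardNS split show ?thesis by linarith
qed


theorem lemma3:
  fixes G :: "('a, 'c) monoid_scheme" and E :: "'b set" and \<phi> :: "'a \<Rightarrow> 'b \<Rightarrow> 'b"
    and \<omega> :: 'b and K H :: "'a set" and u v :: 'a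
  assumes "group G"
    and "frobenius_action G E \<phi>"
    and "\<omega> \<in> E"
    and "K = frobenius_kernel G E \<phi>"
    and "H = stabilizer G \<phi> \<omega>"
    and "K \<lhd> G"
    and "K \<inter> H = {\<one>\<^bsub>G\<^esub>}"
    and "K <#>\<^bsub>G\<^esub> H = carrier G"
    and "card H \<noteq> card K - 1"
    and "u \<in> K" and "v \<in> K" and "u \<noteq> v"
  shows "real (card {z \<in> K. separates G K H z u v}) > real (card K) / 2"
  using lemma3_aux[OF assms] .

end
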